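(* Let $S$ be a finite symmetric generating set of $\mathbb{Z}$ and $(X_n)_{n\ge0}$ the lazy random walk on $\mathrm{Cay}(\mathbb{Z},S)$. Then $$\mathbb{E}[D_{\mathbb{Z}}(X_n)]\xrightarrow[n\to\infty]{}2+\sum_{k\ge2}\frac{1}{[\mathbb{Z}:\Lambda_k]}<\infty.$$
   Context: For $x\ne0$, $D_{\mathbb{Z}}(x)=\min\{[\mathbb{Z}:N]: N \text{ a finite index subgroup of }\mathbb{Z},\ x\notin N\}$, and $D_{\mathbb{Z}}(0)=0$. $\Lambda_k$ ($k\ge2$) is the intersection of all subgroups of $\mathbb{Z}$ of index at most $k$. The lazy random walk starts at $0$ and at each step stays put with probability $1/2$ and otherwise adds a uniformly chosen element of $S$. *)

theory Defs
  imports "HOL-Probability.Probability"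
begin

definition int_subgroup :: "int set \<Rightarrow> bool" where
  "int_subgroup N \<longleftrightarrow> 0 \<in> N \<and> (\<forall>a\<in>N. \<forall>b\<in>N. a - b \<in> N)"

definition int_cosets :: "int set \<Rightarrow> int set set" where
  "int_cosets N = {{x + n | n. n \<in> N} | x. True}"

definition finite_index :: "int set \<Rightarrow> bool" where
  "finite_index N \<longleftrightarrow> int_subgroup N \<and> finite (int_cosets N)"

definition int_index :: "int set \<Rightarrow> nat" where
  "int_index N = card (int_cosets N)"

definition DZ :: "int \<Rightarrow> nat" where
  "DZ x = (if x = 0 then 0
           else Inf {int_index N | N. finite_index N \<and> x \<notin> N})"

definition Lambda :: "nat \<Rightarrow> int set" where
  "Lambda k = \<Inter> {N. finite_index N \<and> int_index N \<le> k}"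

definition int_generated :: "int set \<Rightarrow> int set" where
  "int_generated S = \<Inter> {N. int_subgroup N \<and> S \<subseteq> N}"

definition lazy_step :: "int set \<Rightarrow> int pmf" where
  "lazy_step S = bind_pmf (bernoulli_pmf (1/2))
     (\<lambda>b. if b then return_pmf 0 else pmf_of_set S)"

primrec lazy_walk :: "int set \<Rightarrow> nat \<Rightarrow> int pmf" where
  "lazy_walk S 0 = return_pmf 0"
| "lazy_walk S (Suc n) = bind_pmf (lazy_walk S n) (\<lambda>x. map_pmf (\<lambda>s. x + s) (lazy_step S))"

end

theory Submission
  imports Defs
begin

lemma sg_diff: "int_subgroup N \<Longrightarrow> a \<in> N \<Longrightarrow> b \<in> N \<Longrightarrow> a - b \<in> N"
  by (simp add: int_subgroup_def)
lemma sg_0: "int_subgroup N \<Longrightarrow> 0 \<in> N"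
  by (simp add: int_subgroup_def)
lemma sg_neg: "int_subgroup N \<Longrightarrow> a \<in> N \<Longrightarrow> - a \<in> N"
  using sg_diff[of N 0 a] sg_0 by auto
lemma sg_add: "int_subgroup N \<Longrightarrow> a \<in> N \<Longrightarrow> b \<in> N \<Longrightarrow> a + b \<in> N"
  using sg_diff[of N a "-b"] sg_neg by auto
lemma sg_mult_nat: "int_subgroup N \<Longrightarrow> a \<in> N \<Longrightarrow> a * int k \<in> N"
  by (induction k) (auto simp: sg_0 algebra_simps intro: sg_add)
lemma sg_mult: "int_subgroup N \<Longrightarrow> a \<in> N \<Longrightarrow> a * k \<in> N"
proof (cases "k \<ge> 0")
  case True
  assume "int_subgroup N" "a \<in> N"
  then show ?thesis using sg_mult_nat[of N a "nat k"] True by simp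
next
  case False
  assume h: "int_subgroup N" "a \<in> N"
  then have "a * int (nat (-k)) \<in> N" by (rule sg_mult_nat)
  then have "- (a * int (nat (-k))) \<in> N" using h sg_neg by blast
  then show ?thesis using False by simp
qed

lemma mZ_subgroup: "int_subgroup {y. (m::int) dvd y}"
  by (auto simp: int_subgroup_def)

lemma subgroup_cases:
  assumes N: "int_subgroup N"
  shows "N = {0} \<or> (\<exists>m>0. N = {y. m dvd y})"
proof (cases "N = {0}")
  case False
  then obtain x where x: "x \<in> N" "x \<noteq> 0" using sg_0[OF N] by blast
  have ax: "\<bar>x\<bar> \<in> N" using x sg_neg[OF N] by (cases "x \<ge> 0") auto
  define n where "n = (LEAST n::nat. n > 0 \<and> int n \<in> N)"
  have ex: "nat \<bar>x\<bar> > 0 \<and> int (nat \<bar>x\<bar>) \<in> N" using ax x by simp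
  have n: "n > 0 \<and> int n \<in> N" unfolding n_def by (rule LeastI[of "\<lambda>n. n > 0 \<and> int n \<in> N", OF ex])
  have nmin: "\<And>k. k > 0 \<Longrightarrow> int k \<in> N \<Longrightarrow> n \<le> k" unfolding n_def by (rule Least_le) simp
  have "N = {y. int n dvd y}"
  proof (intro set_eqI iffI)
    fix y assume y: "y \<in> N"
    have "y - int n * (y div int n) \<in> N"
      using sg_diff[OF N y sg_mult[OF N, of "int n" "y div int n"]] n by simp
    moreover have "y - int n * (y div int n) = y mod int n" by (simp add: mod_div_mult_eq minus_mult_div_eq_mod)
    ultimately have r: "y mod int n \<in> N" by simp
    have "y mod int n = 0"
    proof (rule ccontr)
      assume "y mod int n \<noteq> 0"
      moreover have "y mod int n \<ge> 0" "y mod int n < int n" using n by auto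
      ultimately have "n \<le> nat (y mod int n)" using nmin[of "nat (y mod int n)"] r by simp
      then have "int n \<le> y mod int n" using \<open>y mod int n \<ge> 0\<close> by (simp add: le_nat_iff)
      then show False using \<open>y mod int n < int n\<close> by linarith
    qed
    then show "y \<in> {y. int n dvd y}" by auto
  next
    fix y assume "y \<in> {y. int n dvd y}"
    then obtain k where "y = int n * k" by auto
    then show "y \<in> N" using sg_mult[OF N, of "int n" k] n by simp
  qed
  then show ?thesis using n by (intro disjI2 exI[of _ "int n"]) auto
qed simp

lemma coset_mZ: "(m::int) > 0 \<Longrightarrow> {x + n |n. n \<in> {y. m dvd y}} = {y. y mod m = x mod m}"
proof (intro set_eqI iffI)
  fix y assume "m > 0" "y \<in> {x + n |n. n \<in> {y. m dvd y}}"
  then obtain n where n: "m dvd n" "y = x + n" by auto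
  then have "(x + n) mod m = x mod m" using mod_eq_dvd_iff[of "x+n" m x] by simp
  then show "y \<in> {y. y mod m = x mod m}" using n by simp
next
  fix y assume "m > 0" "y \<in> {y. y mod m = x mod m}"
  then have "m dvd y - x" by (simp add: mod_eq_dvd_iff)
  then show "y \<in> {x + n |n. n \<in> {y. m dvd y}}" by (intro CollectI exI[of _ "y - x"]) auto
qed

lemma cosets_mZ: "(m::int) > 0 \<Longrightarrow> int_cosets {y. m dvd y} = (\<lambda>r. {y. y mod m = r}) ` {0..<m}"
proof -
  assume m: "m > 0"
  have "int_cosets {y. m dvd y} = {{y. y mod m = x mod m} | x. True}"
    unfolding int_cosets_def using coset_mZ[OF m] by simp
  also have "\<dots> = (\<lambda>r. {y. y mod m = r}) ` {0..<m}"
  proof (intro set_eqI iffI)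
    fix A assume "A \<in> {{y. y mod m = x mod m} | x. True}"
    then obtain x where "A = {y. y mod m = x mod m}" by auto
    then show "A \<in> (\<lambda>r. {y. y mod m = r}) ` {0..<m}" using m by (intro image_eqI[of _ _ "x mod m"]) auto
  next
    fix A assume "A \<in> (\<lambda>r. {y. y mod m = r}) ` {0..<m}"
    then obtain r where r: "r \<in> {0..<m}" "A = {y. y mod m = r}" by auto
    then have "r mod m = r" by simp
    then show "A \<in> {{y. y mod m = x mod m} | x. True}" using r by (intro CollectI exI[of _ r]) auto
  qed
  finally show ?thesis .
qed

lemma index_mZ: "(m::int) > 0 \<Longrightarrow> finite (int_cosets {y. m dvd y}) \<and> int_index {y. m dvd y} = nat m"
proof -
  assume m: "m > 0"
  have inj: "inj_on (\<lambda>r. {y. y mod m = r}) {0..<m}"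
  proof (rule inj_onI)
    fix r s assume rs: "r \<in> {0..<m}" "s \<in> {0..<m}" "{y. y mod m = r} = {y. y mod m = s}"
    have "r mod m = r" using rs by simp
    then have "r \<in> {y. y mod m = r}" by simp
    then have "r mod m = s" using rs(3) by blast
    then show "r = s" using rs by simp
  qed
  show ?thesis unfolding int_index_def cosets_mZ[OF m] using card_image[OF inj] by simp
qed

lemma cosets_zero_infinite: "infinite (int_cosets {0})"
proof -
  have "int_cosets {0} = (\<lambda>x. {x}) ` UNIV" unfolding int_cosets_def by auto
  moreover have "inj (\<lambda>x::int. {x})" by (auto intro: injI)
  ultimately show ?thesis using finite_imageD infinite_UNIV_int by metis
qed

lemma finite_index_iff: "finite_index N \<longleftrightarrow> (\<exists>m>0. N = {y. m dvd y})"
proof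
  assume "finite_index N"
  then have N: "int_subgroup N" "finite (int_cosets N)" by (auto simp: finite_index_def)
  then show "\<exists>m>0. N = {y. m dvd y}" using subgroup_cases[OF N(1)] cosets_zero_infinite by auto
next
  assume "\<exists>m>0. N = {y. m dvd y}"
  then show "finite_index N" using index_mZ mZ_subgroup by (auto simp: finite_index_def)
qed

definition ell :: "nat \<Rightarrow> int" where "ell k = Lcm (int ` {1..k})"

lemma ell_pos: "ell k > 0"
proof -
  have "ell k \<noteq> 0" unfolding ell_def by (subst Lcm_0_iff) auto
  moreover have "ell k \<ge> 0" unfolding ell_def by (rule Lcm_int_greater_eq_0)
  ultimately show ?thesis by simp
qed

lemma ell_dvd_iff: "ell k dvd x \<longleftrightarrow> (\<forall>m\<in>{1..k}. int m dvd x)"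
  unfolding ell_def Lcm_dvd_iff by auto

lemma Lambda_eq: "Lambda k = {y. ell k dvd y}"
proof (intro set_eqI iffI)
  fix y assume y: "y \<in> Lambda k"
  have "int m dvd y" if m: "m \<in> {1..k}" for m
  proof -
    have "finite_index {y. int m dvd y}" unfolding finite_index_iff using m by (intro exI[of _ "int m"]) auto
    moreover have "int_index {y. int m dvd y} \<le> k" using index_mZ[of "int m"] m by auto
    ultimately show ?thesis using y unfolding Lambda_def by blast
  qed
  then show "y \<in> {y. ell k dvd y}" by (simp add: ell_dvd_iff)
next
  fix y assume y: "y \<in> {y. ell k dvd y}"
  show "y \<in> Lambda k" unfolding Lambda_def
  proof (rule InterI)
    fix N assume "N \<in> {N. finite_index N \<and> int_index N \<le> k}"
    then obtain m where m: "m > 0" "N = {y. m dvd y}" "int_index N \<le> k" by (auto simp: finite_index_iff)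
    then have "nat m \<in> {1..k}" using index_mZ[of m] by auto
    then have "int (nat m) dvd y" using y by (simp only: ell_dvd_iff mem_Collect_eq)
    then show "y \<in> N" using m by simp
  qed
qed

lemma index_Lambda: "int_index (Lambda k) = nat (ell k)"
  unfolding Lambda_eq using index_mZ[OF ell_pos] by simp

lemma DZ_set: "{int_index N | N. finite_index N \<and> x \<notin> N} = {n. n > 0 \<and> \<not> int n dvd x}"
proof (intro set_eqI iffI)
  fix n assume "n \<in> {int_index N | N. finite_index N \<and> x \<notin> N}"
  then obtain N where N: "n = int_index N" "finite_index N" "x \<notin> N" by auto
  then obtain m where m: "m > 0" "N = {y. m dvd y}" by (auto simp: finite_index_iff)
  then show "n \<in> {n. n > 0 \<and> \<not> int n dvd x}" using N index_mZ[of m] by auto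
next
  fix n assume n: "n \<in> {n. n > 0 \<and> \<not> int n dvd x}"
  then have "n = int_index {y. int n dvd y}" "finite_index {y. int n dvd y}" "x \<notin> {y. int n dvd y}"
    using index_mZ[of "int n"] unfolding finite_index_iff by (auto intro!: exI[of _ "int n"])
  then show "n \<in> {int_index N | N. finite_index N \<and> x \<notin> N}" by blast
qed

lemma DZ_props:
  assumes "x \<noteq> 0"
  shows "DZ x > 0" "\<not> int (DZ x) dvd x" "\<And>m. 0 < m \<Longrightarrow> m < DZ x \<Longrightarrow> int m dvd x"
proof -
  have eq: "DZ x = Inf {n. n > 0 \<and> \<not> int n dvd x}" using assms unfolding DZ_def DZ_set by simp
  have ne: "nat \<bar>x\<bar> + 1 \<in> {n. n > 0 \<and> \<not> int n dvd x}"
  proof -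
    have "\<not> (int (nat \<bar>x\<bar> + 1)) dvd x"
    proof
      assume "int (nat \<bar>x\<bar> + 1) dvd x"
      then have "int (nat \<bar>x\<bar> + 1) \<le> \<bar>x\<bar>" using dvd_imp_le_int[OF assms] by fastforce
      then show False by simp
    qed
    then show ?thesis by simp
  qed
  then have mem: "DZ x \<in> {n. n > 0 \<and> \<not> int n dvd x}" unfolding eq by (rule Inf_nat_def1[OF ex_in_conv[THEN iffD1, OF exI]] ) 
  then show "DZ x > 0" "\<not> int (DZ x) dvd x" by auto
  fix m assume m: "0 < m" "m < DZ x"
  show "int m dvd x"
  proof (rule ccontr)
    assume "\<not> int m dvd x"
    then have "m \<in> {n. n > 0 \<and> \<not> int n dvd x}" using m by simp
    then have "DZ x \<le> m" unfolding eq by (rule cInf_lower) simp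
    then show False using m by simp
  qed
qed

lemma DZ_ge2: assumes "x \<noteq> 0" shows "DZ x \<ge> 2"
proof -
  have "DZ x \<noteq> 1" using DZ_props(2)[OF assms] by auto
  then show ?thesis using DZ_props(1)[OF assms] by linarith
qed

lemma ell_dvd_DZ: "x \<noteq> 0 \<Longrightarrow> ell (k+2) dvd x \<longleftrightarrow> k + 2 < DZ x"
proof
  assume x: "x \<noteq> 0" and d: "ell (k+2) dvd x"
  show "k + 2 < DZ x"
  proof (rule ccontr)
    assume "\<not> k + 2 < DZ x"
    then have "DZ x \<in> {1..k+2}" using DZ_props(1)[OF x] by auto
    then show False using d DZ_props(2)[OF x] by (auto simp: ell_dvd_iff)
  qed
next
  assume x: "x \<noteq> 0" and "k + 2 < DZ x"
  then show "ell (k+2) dvd x" using DZ_props(3)[OF x] by (auto simp: ell_dvd_iff)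
qed

definition gk :: "nat \<Rightarrow> int \<Rightarrow> real" where
  "gk k x = (if x \<noteq> 0 \<and> ell (k+2) dvd x then 1 else 0)"

lemma gk_sums: "(\<lambda>k. gk k x) sums (if x = 0 then 0 else real (DZ x) - 2)"
proof (cases "x = 0")
  case True then show ?thesis by (simp add: gk_def)
next
  case False
  have eq: "gk k x = (if k \<in> {..<DZ x - 2} then 1 else 0)" for k
    using ell_dvd_DZ[OF False, of k] False by (auto simp: gk_def)
  have "(\<lambda>k. gk k x) sums (\<Sum>k\<in>{..<DZ x - 2}. gk k x)"
    by (rule sums_finite) (auto simp: eq)
  also have "(\<Sum>k\<in>{..<DZ x - 2}. gk k x) = real (DZ x - 2)" by (simp add: eq)
  also have "\<dots> = real (DZ x) - 2" using DZ_ge2[OF False] by simp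
  finally show ?thesis using False by simp
qed

lemma DZ_decomp: "real (DZ x) = 2 * (if x = 0 then 0 else 1) + (\<Sum>k. gk k x)"
  using sums_unique[OF gk_sums[of x]] by (cases "x = 0") (auto simp: DZ_def)

lemma ell_mult2: "m \<ge> 2 \<Longrightarrow> int m * (int m - 1) dvd ell m"
proof -
  assume m: "m \<ge> 2"
  have a: "int m dvd ell m" unfolding ell_def using m by (intro dvd_Lcm) auto
  then obtain t where t: "ell m = int m * t" by auto
  have b: "int m - 1 dvd ell m"
  proof -
    have "int (m - 1) dvd ell m" unfolding ell_def by (intro dvd_Lcm imageI) (use m in auto)
    then show ?thesis using m by (simp add: of_nat_diff)
  qed
  have "coprime (int m - 1) (int m)" using coprime_doff_one_right[of "int m"] by (simp add: ac_simps)
  then have "int m - 1 dvd t" using b t by (metis coprime_dvd_mult_right_iff)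
  then show ?thesis using t by auto
qed

lemma ell_bound: "2 * (int k + 1)^3 \<le> 8 * ell (k+2)"
proof (cases "k = 0")
  case True
  have "int (k+2) * (int (k+2) - 1) dvd ell (k+2)" using ell_mult2[of "k+2"] by simp
  then have "int (k+2) * (int (k+2) - 1) \<le> ell (k+2)" using ell_pos[of "k+2"] by (simp add: zdvd_imp_le)
  then show ?thesis using True by simp
next
  case False
  define m where "m = int k + 2"
  have mk: "int (k+2) = m" by (simp add: m_def)
  obtain u where u: "ell (k+2) = m * (m - 1) * u" using ell_mult2[of "k+2"] mk by (auto elim!: dvdE)
  have mm: "m * (m - 1) > 0" using m_def by simp
  have "0 < m * (m - 1) * u" using ell_pos[of "k+2"] unfolding u .
  then have upos: "u > 0" by (rule zero_less_mult_pos[OF _ mm])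
  have "int k dvd ell (k+2)" unfolding ell_def using False by (intro dvd_Lcm) auto
  moreover have "int k = m - 2" unfolding m_def by simp
  ultimately have "m - 2 dvd ell (k+2)" by simp
  then have "m - 2 dvd m * (m - 1) * u" by (simp only: u)
  moreover have "m - 2 dvd (m - 2) * (m + 1) * u" by (simp only: dvd_triv_left mult.assoc)
  ultimately have "m - 2 dvd m * (m - 1) * u - (m - 2) * (m + 1) * u" by (rule dvd_diff)
  moreover have "m * (m - 1) * u - (m - 2) * (m + 1) * u = 2 * u" by (simp add: algebra_simps)
  ultimately have "m - 2 dvd 2 * u" by simp
  then have "m - 2 \<le> 2 * u" using upos by (simp add: zdvd_imp_le)
  then have "(m - 2) * (m * (m - 1)) \<le> 2 * u * (m * (m - 1))"
    using m_def by (intro mult_right_mono) auto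
  then have h: "(m - 2) * m * (m - 1) \<le> 2 * ell (k+2)" using u by (simp add: algebra_simps)
  have k1: "int k \<ge> 1" using False by simp
  have kk: "int k * int k \<ge> 1" using mult_mono[OF k1 k1] by simp
  have h1: "(int k + 1) * (int k + 1) \<le> 2 * (int k * (int k + 2))" using kk by (simp add: algebra_simps)
  have "2 * (int k + 1) * ((int k + 1) * (int k + 1)) \<le> 2 * (int k + 1) * (2 * (int k * (int k + 2)))"
    using h1 k1 by (intro mult_left_mono) auto
  then have "2 * (int k + 1)^3 \<le> 4 * ((m - 2) * m * (m - 1))"
    unfolding m_def by (simp add: power3_eq_cube algebra_simps)
  then show ?thesis using h by linarith
qed

definition Pop :: "int set \<Rightarrow> (int \<Rightarrow> real) \<Rightarrow> int \<Rightarrow> real" where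
  "Pop S f y = f y / 2 + (\<Sum>s\<in>S. f (y + s)) / (2 * card S)"

lemma set_step: assumes "finite S" "S \<noteq> {}" shows "set_pmf (lazy_step S) \<subseteq> insert 0 S"
  unfolding lazy_step_def using set_pmf_of_set[OF assms(2,1)] by (auto split: if_splits)

lemma finite_walk: "finite S \<Longrightarrow> S \<noteq> {} \<Longrightarrow> finite (set_pmf (lazy_walk S n))"
proof (induction n)
  case 0 then show ?case by simp
next
  case (Suc n)
  have "finite (set_pmf (lazy_step S))" by (rule finite_subset[OF set_step[OF Suc.prems]]) (use Suc.prems in simp)
  then show ?case using Suc by (simp add: set_bind_pmf)
qed

lemma exp_step:
  assumes "finite S" "S \<noteq> {}"
  shows "measure_pmf.expectation (lazy_step S) g = g 0 / 2 + (\<Sum>s\<in>S. g s) / (2 * card S)"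
proof -
  have "measure_pmf.expectation (lazy_step S) g =
      (\<Sum>b\<in>UNIV. pmf (bernoulli_pmf (1/2)) b *\<^sub>R
         measure_pmf.expectation (if b then return_pmf 0 else pmf_of_set S) g)"
    unfolding lazy_step_def using assms by (intro pmf_expectation_bind) auto
  also have "\<dots> = g 0 / 2 + (\<Sum>s\<in>S. g s) / (2 * card S)"
    using assms by (simp add: UNIV_bool integral_pmf_of_set)
  finally show ?thesis .
qed

lemma exp_walk_Suc:
  assumes "finite S" "S \<noteq> {}"
  shows "measure_pmf.expectation (lazy_walk S (Suc n)) f = measure_pmf.expectation (lazy_walk S n) (Pop S f)"
proof -
  have fs: "finite (set_pmf (lazy_step S))" by (rule finite_subset[OF set_step[OF assms]]) (use assms in simp)
  have "measure_pmf.expectation (lazy_walk S (Suc n)) f =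
     (\<Sum>a\<in>set_pmf (lazy_walk S n). pmf (lazy_walk S n) a *\<^sub>R
        measure_pmf.expectation (map_pmf (\<lambda>s. a + s) (lazy_step S)) f)"
    using finite_walk[OF assms] fs by (simp only: lazy_walk.simps, intro pmf_expectation_bind) auto
  also have "\<dots> = (\<Sum>a\<in>set_pmf (lazy_walk S n). pmf (lazy_walk S n) a * Pop S f a)"
    using assms by (simp add: exp_step Pop_def)
  also have "\<dots> = measure_pmf.expectation (lazy_walk S n) (Pop S f)"
    using finite_walk[OF assms] by (subst integral_measure_pmf_real[of "set_pmf (lazy_walk S n)"]) (auto simp: mult.commute)
  finally show ?thesis .
qed

lemma exp_walk:
  assumes "finite S" "S \<noteq> {}"
  shows "measure_pmf.expectation (lazy_walk S n) f = (Pop S ^^ n) f 0"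
proof (induction n arbitrary: f)
  case 0 then show ?case by simp
next
  case (Suc n)
  show ?case using exp_walk_Suc[OF assms] Suc by (simp add: funpow_Suc_right del: funpow.simps)
qed

lemma pmf_walk:
  assumes "finite S" "S \<noteq> {}"
  shows "pmf (lazy_walk S n) x = (Pop S ^^ n) (\<lambda>y. if y = x then 1 else 0) 0"
proof -
  have "pmf (lazy_walk S n) x = measure_pmf.expectation (lazy_walk S n) (\<lambda>y. if y = x then 1 else 0)"
    using finite_walk[OF assms] by (subst integral_measure_pmf_real[of "{x}"]) (auto split: if_splits)
  then show ?thesis using exp_walk[OF assms] by simp
qed

definition Ta :: "int \<Rightarrow> (int \<Rightarrow> real) \<Rightarrow> int \<Rightarrow> real" where
  "Ta a f y = (f y + f (y + a)) / 2"

lemma Pop_bound: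
  assumes "finite S" "S \<noteq> {}" "\<And>y. f y \<le> M"
  shows "Pop S f y \<le> M"
proof -
  have c: "card S > 0" using assms by (simp add: card_gt_0_iff)
  have "(\<Sum>s\<in>S. f (y + s)) \<le> card S * M" using assms(3) sum_bounded_above[of S "\<lambda>s. f (y+s)" M] by simp
  then have "(\<Sum>s\<in>S. f (y + s)) / (2 * card S) \<le> M / 2" using c by (simp add: field_simps)
  then show ?thesis unfolding Pop_def using assms(3)[of y] by simp
qed

lemma Pop_mono:
  assumes "finite S" "S \<noteq> {}" "\<And>y. f y \<le> g y"
  shows "Pop S f y \<le> Pop S g y"
proof -
  have c: "card S > 0" using assms by (simp add: card_gt_0_iff)
  have "(\<Sum>s\<in>S. f (y + s)) \<le> (\<Sum>s\<in>S. g (y + s))" using assms(3) by (intro sum_mono) auto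
  then have "(\<Sum>s\<in>S. f (y + s)) / (2 * card S) \<le> (\<Sum>s\<in>S. g (y + s)) / (2 * card S)" using c
    by (intro divide_right_mono) auto
  then show ?thesis unfolding Pop_def using assms(3)[of y] by simp
qed

lemma Popn_bound:
  assumes "finite S" "S \<noteq> {}" "\<And>y. f y \<le> M"
  shows "(Pop S ^^ n) f y \<le> M"
  using assms(3) by (induction n arbitrary: y) (auto intro!: Pop_bound[OF assms(1,2)])

lemma Popn_mono:
  assumes "finite S" "S \<noteq> {}" "\<And>y. f y \<le> g y"
  shows "(Pop S ^^ n) f y \<le> (Pop S ^^ n) g y"
  using assms(3) by (induction n arbitrary: y) (auto intro!: Pop_mono[OF assms(1,2)])

lemma Pop_cmult: "Pop S (\<lambda>x. c * f x) y = c * Pop S f y"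
  unfolding Pop_def by (simp add: sum_distrib_left[symmetric] field_simps)

lemma Popn_cmult: "(Pop S ^^ n) (\<lambda>x. c * f x) = (\<lambda>y. c * (Pop S ^^ n) f y)"
proof (induction n)
  case 0 then show ?case by simp
next
  case (Suc n)
  show ?case by (rule ext) (simp add: Suc Pop_cmult)
qed

lemma Pop_Ta: "Ta a (Pop S f) = Pop S (Ta a f)"
proof (rule ext)
  fix y
  have e1: "(\<Sum>s\<in>S. Ta a f (y + s)) = ((\<Sum>s\<in>S. f (y + s)) + (\<Sum>s\<in>S. f (y + a + s))) / 2"
    unfolding Ta_def sum_divide_distrib[symmetric] sum.distrib[symmetric] by (simp add: ac_simps)
  have e2: "Ta a f y = (f y + f (y + a)) / 2" by (simp add: Ta_def)
  show "Ta a (Pop S f) y = Pop S (Ta a f) y"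
    unfolding Pop_def e1 e2 unfolding Ta_def by (simp add: add_divide_distrib diff_divide_distrib)
qed

lemma Popn_Ta: "Ta a ((Pop S ^^ n) f) = (Pop S ^^ n) (Ta a f)"
  by (induction n) (simp_all add: Pop_Ta)

lemma Pop_avg:
  assumes "finite S" "S \<noteq> {}" shows "Pop S f y = (\<Sum>s\<in>S. Ta s f y) / card S"
proof -
  have c: "real (card S) > 0" using assms by (simp add: card_gt_0_iff)
  have e: "(\<Sum>s\<in>S. Ta s f y) = (card S * f y + (\<Sum>s\<in>S. f (y + s))) / 2"
    unfolding Ta_def sum_divide_distrib[symmetric] sum.distrib by simp
  show ?thesis unfolding e Pop_def using c by (simp add: field_simps)
qed

lemma Ta_bound: assumes "\<And>y. f y \<le> M" shows "Ta a f y \<le> M"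
proof -
  have "f y + f (y+a) \<le> 2 * M" using assms[of y] assms[of "y+a"] by linarith
  then show ?thesis unfolding Ta_def by (simp add: field_simps)
qed

lemma sum_sym:
  assumes "\<forall>s\<in>S. - s \<in> S"
  shows "(\<Sum>s\<in>S. h (- s)) = (\<Sum>s\<in>(S::int set). h s)"
  by (rule sum.reindex_bij_witness[of S uminus uminus]) (use assms in auto)

lemma sum_S_zero:
  assumes "\<forall>s\<in>S. - s \<in> S"
  shows "(\<Sum>s\<in>S. real_of_int s) = 0"
proof -
  have "(\<Sum>s\<in>S. real_of_int (- s)) = (\<Sum>s\<in>S. real_of_int s)" using sum_sym[OF assms, of real_of_int] .
  then show ?thesis by (simp add: sum_negf)
qed

lemma sum_sin_zero:
  assumes "\<forall>s\<in>S. - s \<in> S"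
  shows "(\<Sum>s\<in>S. sin (t * real_of_int s)) = 0"
proof -
  have "(\<Sum>s\<in>S. sin (t * real_of_int (- s))) = (\<Sum>s\<in>S. sin (t * real_of_int s))"
    using sum_sym[OF assms, of "\<lambda>s. sin (t * real_of_int s)"] .
  then show ?thesis by (simp add: sum_negf)
qed

definition sig :: "int set \<Rightarrow> real" where
  "sig S = (\<Sum>s\<in>S. (real_of_int s)^2) / (2 * card S)"

lemma Pop_sq:
  assumes "finite S" "S \<noteq> {}" "\<forall>s\<in>S. - s \<in> S"
  shows "Pop S (\<lambda>x. (real_of_int x)^2 + c) = (\<lambda>y. (real_of_int y)^2 + c + sig S)"
proof (rule ext)
  fix y
  have c: "card S > 0" using assms by (simp add: card_gt_0_iff)
  have "(\<Sum>s\<in>S. (real_of_int (y + s))^2 + c) =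
      (\<Sum>s\<in>S. ((real_of_int y)^2 + c) + 2 * real_of_int y * real_of_int s + (real_of_int s)^2)"
    by (intro sum.cong) (auto simp: power2_eq_square algebra_simps)
  also have "\<dots> = card S * ((real_of_int y)^2 + c) + 2 * real_of_int y * (\<Sum>s\<in>S. real_of_int s) + (\<Sum>s\<in>S. (real_of_int s)^2)"
    by (simp add: sum.distrib sum_distrib_left)
  also have "\<dots> = card S * ((real_of_int y)^2 + c) + (\<Sum>s\<in>S. (real_of_int s)^2)"
    using sum_S_zero[OF assms(3)] by simp
  finally have e: "(\<Sum>s\<in>S. (real_of_int (y + s))^2 + c) = card S * ((real_of_int y)^2 + c) + (\<Sum>s\<in>S. (real_of_int s)^2)" .
  show "Pop S (\<lambda>x. (real_of_int x)^2 + c) y = (real_of_int y)^2 + c + sig S"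
    unfolding Pop_def sig_def e using c by (simp add: field_simps)
qed

lemma Popn_sq:
  assumes "finite S" "S \<noteq> {}" "\<forall>s\<in>S. - s \<in> S"
  shows "(Pop S ^^ n) (\<lambda>x. (real_of_int x)^2 + c) = (\<lambda>y. (real_of_int y)^2 + c + n * sig S)"
proof (induction n arbitrary: c)
  case 0 then show ?case by simp
next
  case (Suc n)
  have "(Pop S ^^ Suc n) (\<lambda>x. (real_of_int x)^2 + c) = (Pop S ^^ n) (\<lambda>y. (real_of_int y)^2 + (c + sig S))"
    by (simp only: funpow_Suc_right o_apply Pop_sq[OF assms] add.assoc)
  also have "\<dots> = (\<lambda>y. (real_of_int y)^2 + c + Suc n * sig S)"
    by (simp only: Suc.IH[of "c + sig S"]) (simp add: algebra_simps)
  finally show ?case .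
qed

definition phi :: "int set \<Rightarrow> real \<Rightarrow> real" where
  "phi S t = 1/2 + (\<Sum>s\<in>S. cos (t * real_of_int s)) / (2 * card S)"

lemma Pop_cos:
  assumes "finite S" "S \<noteq> {}" "\<forall>s\<in>S. - s \<in> S"
  shows "Pop S (\<lambda>x. cos (t * real_of_int x)) = (\<lambda>y. phi S t * cos (t * real_of_int y))"
proof (rule ext)
  fix y
  have "(\<Sum>s\<in>S. cos (t * real_of_int (y + s))) =
        (\<Sum>s\<in>S. cos (t * real_of_int y) * cos (t * real_of_int s) - sin (t * real_of_int y) * sin (t * real_of_int s))"
    by (intro sum.cong) (auto simp: distrib_left cos_add)
  also have "\<dots> = cos (t * real_of_int y) * (\<Sum>s\<in>S. cos (t * real_of_int s)) - sin (t * real_of_int y) * (\<Sum>s\<in>S. sin (t * real_of_int s))"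
    by (simp add: sum_subtractf sum_distrib_left)
  also have "\<dots> = cos (t * real_of_int y) * (\<Sum>s\<in>S. cos (t * real_of_int s))"
    using sum_sin_zero[OF assms(3)] by simp
  finally have e: "(\<Sum>s\<in>S. cos (t * real_of_int (y + s))) = cos (t * real_of_int y) * (\<Sum>s\<in>S. cos (t * real_of_int s))" .
  show "Pop S (\<lambda>x. cos (t * real_of_int x)) y = phi S t * cos (t * real_of_int y)"
    unfolding Pop_def phi_def e by (simp add: field_simps)
qed

lemma Popn_cos:
  assumes "finite S" "S \<noteq> {}" "\<forall>s\<in>S. - s \<in> S"
  shows "(Pop S ^^ n) (\<lambda>x. cos (t * real_of_int x)) = (\<lambda>y. phi S t ^ n * cos (t * real_of_int y))"
proof (induction n)
  case 0 then show ?case by simp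
next
  case (Suc n)
  have "(Pop S ^^ Suc n) (\<lambda>x. cos (t * real_of_int x)) = (Pop S ^^ n) (\<lambda>y. phi S t * cos (t * real_of_int y))"
    by (simp only: funpow_Suc_right o_apply Pop_cos[OF assms])
  also have "\<dots> = (\<lambda>y. phi S t ^ Suc n * cos (t * real_of_int y))" by (simp add: Popn_cmult Suc mult.assoc)
  finally show ?case .
qed

lemma exp_binomial_Suc:
  assumes "p \<in> {0..1}"
  shows "measure_pmf.expectation (binomial_pmf (Suc n) p) (h :: nat \<Rightarrow> real) =
     p * measure_pmf.expectation (binomial_pmf n p) (\<lambda>k. h (Suc k)) +
     (1 - p) * measure_pmf.expectation (binomial_pmf n p) h"
proof -
  have fin: "finite (set_pmf (binomial_pmf n p))" using assms by auto
  have "binomial_pmf (Suc n) p = bernoulli_pmf p \<bind> (\<lambda>b. map_pmf (\<lambda>k. (if b then 1 else 0) + k) (binomial_pmf n p))"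
    using binomial_pmf_Suc[OF assms] by (simp add: map_pmf_def)
  then have "measure_pmf.expectation (binomial_pmf (Suc n) p) h =
     (\<Sum>b\<in>UNIV. pmf (bernoulli_pmf p) b *\<^sub>R measure_pmf.expectation (map_pmf (\<lambda>k. (if b then 1 else 0) + k) (binomial_pmf n p)) h)"
    using fin by (simp only:, intro pmf_expectation_bind) auto
  then show ?thesis using assms by (simp add: UNIV_bool)
qed

lemma exp_binomial_0: "p \<in> {0..1} \<Longrightarrow> measure_pmf.expectation (binomial_pmf 0 p) (h :: nat \<Rightarrow> real) = h 0"
  by (simp add: binomial_pmf_0)

definition bb :: "nat \<Rightarrow> real" where "bb j = real (j choose (j div 2)) / 2 ^ j"

lemma central_sq: "(real ((2*m) choose m) / 4 ^ m)^2 * (2 * m + 1) \<le> 1"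
proof (induction m)
  case 0 then show ?case by simp
next
  case (Suc m)
  define X where "X = Suc (2*m) choose m"
  define Y where "Y = (2 * Suc m) choose Suc m"
  define Z where "Z = (2*m) choose m"
  have e: "Suc (Suc (2*m)) = 2 * Suc m" by simp
  have a: "2 * Suc m * X = Y * Suc m" unfolding X_def Y_def
    using Suc_times_binomial_eq[of "Suc (2*m)" m] by (simp only: e)
  have c: "Suc (2*m) choose Suc m = Suc (2*m) choose m"
    using binomial_symmetric[of "Suc m" "Suc (2*m)"] by simp
  have b: "Suc (2*m) * Z = X * Suc m"
    using Suc_times_binomial_eq[of "2*m" m] by (simp only: c X_def Z_def)
  have "Suc m * Y = Suc m * (2 * X)" using a by (simp add: ac_simps)
  then have Y2: "Y = 2 * X" by (simp only: nat_mult_eq_cancel1[OF zero_less_Suc])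
  have rn: "Suc m * ((2 * Suc m) choose Suc m) = 2 * (Suc (2 * m) * ((2*m) choose m))"
    unfolding Y_def[symmetric] Z_def[symmetric] Y2 using b by (simp add: ac_simps)
  have r: "real (Suc m) * real ((2 * Suc m) choose Suc m) = 2 * (2 * m + 1) * real ((2*m) choose m)"
    using arg_cong[OF rn, of real] by (simp add: algebra_simps)
  define C where "C = real ((2*m) choose m)"
  define D where "D = real ((2 * Suc m) choose Suc m)"
  define Q where "Q = (4::real) ^ m"
  have Q: "Q > 0" unfolding Q_def by simp
  have r': "D = 2 * (2 * m + 1) * C / (m + 1)" using r unfolding C_def D_def by (simp add: field_simps)
  have IH: "(C / Q)^2 * (2 * real m + 1) \<le> 1" using Suc.IH unfolding C_def Q_def by (simp add: add.commute)
  define A where "A = C / Q"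
  have d: "D / 4 ^ Suc m = ((2 * real m + 1) / (2 * (real m + 1))) * A"
  proof -
    have q4: "(4::real) ^ Suc m = 4 * Q" unfolding Q_def by simp
    have mp: "real m + 1 > 0" by simp
    have "D / 4 ^ Suc m = (2 * (2 * real m + 1) * C) / ((real m + 1) * (4 * Q))" unfolding r' q4 by (simp add: ac_simps)
    also have "\<dots> = ((2 * real m + 1) / (2 * (real m + 1))) * (C / Q)"
      using Q mp by (simp add: divide_simps) (simp add: algebra_simps)
    finally show ?thesis unfolding A_def .
  qed
  have "(D / 4 ^ Suc m)^2 * (2 * real (Suc m) + 1) = (A^2 * (2 * real m + 1)) * ((2 * real m + 1) * (2 * real m + 3) / (4 * (real m + 1)^2))"
    unfolding d by (simp add: field_simps power2_eq_square)
  also have "\<dots> \<le> 1 * 1"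
  proof (rule mult_mono)
    have "(2 * real m + 1) * (2 * real m + 3) \<le> 4 * (real m + 1)^2" by (simp add: power2_eq_square algebra_simps)
    then show "(2 * real m + 1) * (2 * real m + 3) / (4 * (real m + 1)^2) \<le> 1" by (simp add: field_simps)
  qed (use IH in \<open>auto simp: A_def\<close>)
  finally show ?case unfolding D_def by simp
qed

lemma bb_sq: "(bb j)^2 \<le> 2 / (real j + 1)"
proof -
  define m where "m = j div 2"
  have le: "bb j \<le> real ((2*m) choose m) / 4 ^ m"
  proof (cases "even j")
    case True
    then have "j = 2*m" by (simp add: m_def)
    then show ?thesis by (simp add: bb_def power_mult)
  next
    case False
    then have j: "j = Suc (2*m)" using m_def by presburger
    have "Suc (2*m) choose m \<le> 2 * ((2*m) choose m)"
    proof (cases m)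
      case 0 then show ?thesis by simp
    next
      case (Suc k)
      have "Suc (2*m) choose m = Suc (2*m) choose Suc k" using Suc by (simp only:)
      also have "\<dots> = ((2*m) choose k) + ((2*m) choose Suc k)" by (rule binomial_Suc_Suc)
      also have "\<dots> = ((2*m) choose k) + ((2*m) choose m)" using Suc by (simp only:)
      also have "\<dots> \<le> 2 * ((2*m) choose m)" using binomial_maximum'[of m k] by linarith
      finally show ?thesis .
    qed
    then have "real (Suc (2*m) choose m) \<le> 2 * real ((2*m) choose m)" by linarith
    moreover have "(2::real) ^ Suc (2*m) = 2 * 4 ^ m" by (simp add: power_mult)
    moreover have "Suc (2*m) div 2 = m" by simp
    ultimately show ?thesis unfolding bb_def j by (simp add: field_simps)
  qed
  have nn: "bb j \<ge> 0" by (simp add: bb_def)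
  have "(bb j)^2 \<le> (real ((2*m) choose m) / 4 ^ m)^2" using le nn by (simp add: power_mono)
  also have "\<dots> \<le> 1 / (2 * m + 1)" using central_sq[of m] by (simp add: field_simps)
  also have "\<dots> \<le> 2 / (real j + 1)"
  proof -
    have "j \<le> 2*m+1" unfolding m_def by presburger
    then have "real j \<le> real (2*m+1)" by (simp only: of_nat_le_iff)
    then have "real j + 1 \<le> 2 * (2 * real m + 1)" by simp
    then show ?thesis by (simp add: field_simps)
  qed
  finally show ?thesis .
qed

lemma bb_nonneg: "bb j \<ge> 0" by (simp add: bb_def)

lemma Ta_binomial:
  "(Ta a ^^ j) f y = measure_pmf.expectation (binomial_pmf j (1/2)) (\<lambda>i. f (y + int i * a))"
proof (induction j arbitrary: y)
  case 0 then show ?case by (simp add: exp_binomial_0)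
next
  case (Suc j)
  have "(Ta a ^^ Suc j) f y = Ta a ((Ta a ^^ j) f) y" by simp
  also have "\<dots> = ((Ta a ^^ j) f y + (Ta a ^^ j) f (y + a)) / 2" by (rule Ta_def)
  also have "\<dots> = (measure_pmf.expectation (binomial_pmf j (1/2)) (\<lambda>i. f (y + int i * a)) +
      measure_pmf.expectation (binomial_pmf j (1/2)) (\<lambda>i. f (y + a + int i * a))) / 2"
    by (simp only: Suc.IH)
  also have "\<dots> = measure_pmf.expectation (binomial_pmf (Suc j) (1/2)) (\<lambda>i. f (y + int i * a))"
    by (simp add: exp_binomial_Suc algebra_simps)
  finally show ?case .
qed

lemma Ta_delta_bound:
  assumes "a \<noteq> 0"
  shows "(Ta a ^^ j) (\<lambda>y. if y = x then 1 else 0) y \<le> bb j"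
proof -
  have "(Ta a ^^ j) (\<lambda>y. if y = x then 1 else 0) y =
     (\<Sum>i\<in>{..j}. (if y + int i * a = x then 1 else 0) * pmf (binomial_pmf j (1/2)) i)"
    unfolding Ta_binomial by (subst integral_measure_pmf_real[of "{..j}"]) auto
  also have "\<dots> \<le> bb j"
  proof (cases "\<exists>i0\<in>{..j}. y + int i0 * a = x")
    case True
    then obtain i0 where i0: "i0 \<in> {..j}" "y + int i0 * a = x" by auto
    have "(\<Sum>i\<in>{..j}. (if y + int i * a = x then 1 else 0) * pmf (binomial_pmf j (1/2)) i) =
          (\<Sum>i\<in>{i0}. (if y + int i * a = x then 1 else 0) * pmf (binomial_pmf j (1/2)) i)"
    proof (rule sum.mono_neutral_right)
      show "\<forall>i\<in>{..j} - {i0}. (if y + int i * a = x then 1 else 0) * pmf (binomial_pmf j (1/2)) i = 0"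
      proof
        fix i assume "i \<in> {..j} - {i0}"
        then have "i \<noteq> i0" by auto
        then have "y + int i * a \<noteq> x" using i0 assms by auto
        then show "(if y + int i * a = x then 1 else 0) * pmf (binomial_pmf j (1/2)) i = 0" by simp
      qed
    qed (use i0 in auto)
    also have "\<dots> = real (j choose i0) / 2 ^ j" using i0
      by (simp add: power_add[symmetric] power_one_over)
    also have "\<dots> \<le> bb j" unfolding bb_def using binomial_maximum[of j i0] by (simp add: divide_right_mono)
    finally show ?thesis .
  next
    case False
    then show ?thesis using bb_nonneg[of j] by (simp add: sum.neutral)
  qed
  finally show ?thesis .
qed

lemma sup_ind:
  assumes fin: "finite S" and ne: "S \<noteq> {}" and aS: "a \<in> S" and a0: "a \<noteq> 0"
  shows "(Pop S ^^ n) ((Ta a ^^ j) (\<lambda>y. if y = x then 1 else 0)) y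
     \<le> measure_pmf.expectation (binomial_pmf n (1 / card S)) (\<lambda>i. bb (j + i))"
proof (induction n arbitrary: j y)
  have c1: "card S \<ge> 1" using fin ne by (simp add: Suc_le_eq card_gt_0_iff)
  have p01: "1 / real (card S) \<in> {0..1}" using c1 by simp
  {
    case 0
    show ?case using Ta_delta_bound[OF a0] by (simp add: exp_binomial_0[OF p01])
  next
    case (Suc n)
    define g where "g = (Ta a ^^ j) (\<lambda>y. if y = x then 1 else 0)"
    define F where "F = (\<lambda>j. measure_pmf.expectation (binomial_pmf n (1 / card S)) (\<lambda>i. bb (j + i)))"
    have IH: "\<And>j y. (Pop S ^^ n) ((Ta a ^^ j) (\<lambda>y. if y = x then 1 else 0)) y \<le> F j"
      using Suc.IH unfolding F_def by blast
    have "(Pop S ^^ Suc n) g y = Pop S ((Pop S ^^ n) g) y" by simp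
    also have "\<dots> = (\<Sum>s\<in>S. Ta s ((Pop S ^^ n) g) y) / card S" by (rule Pop_avg[OF fin ne])
    also have "(\<Sum>s\<in>S. Ta s ((Pop S ^^ n) g) y) = Ta a ((Pop S ^^ n) g) y + (\<Sum>s\<in>S - {a}. Ta s ((Pop S ^^ n) g) y)"
      using fin aS by (rule sum.remove)
    also have "Ta a ((Pop S ^^ n) g) y = (Pop S ^^ n) ((Ta a ^^ Suc j) (\<lambda>y. if y = x then 1 else 0)) y"
      unfolding Popn_Ta g_def by simp
    also have "(\<Sum>s\<in>S - {a}. Ta s ((Pop S ^^ n) g) y) \<le> (\<Sum>s\<in>S - {a}. F j)"
      by (intro sum_mono Ta_bound) (use IH g_def in auto)
    also have "(\<Sum>s\<in>S - {a}. F j) = (real (card S) - 1) * F j"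
      using fin aS c1 by (simp add: card_Diff_singleton of_nat_diff)
    finally have h: "(Pop S ^^ Suc n) g y \<le> ((Pop S ^^ n) ((Ta a ^^ Suc j) (\<lambda>y. if y = x then 1 else 0)) y + (real (card S) - 1) * F j) / card S"
      using c1 by (simp add: divide_right_mono)
    also have "\<dots> \<le> (F (Suc j) + (real (card S) - 1) * F j) / card S"
      using IH[of "Suc j" y] c1 by (simp add: divide_right_mono)
    also have "\<dots> = (1 / card S) * F (Suc j) + (1 - 1 / card S) * F j"
      using c1 by (simp add: field_simps)
    also have "\<dots> = measure_pmf.expectation (binomial_pmf (Suc n) (1 / card S)) (\<lambda>i. bb (j + i))"
      unfolding F_def exp_binomial_Suc[OF p01] by simp
    finally show ?case unfolding g_def .
  }
qed

lemma exp_inv_binomial: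
  assumes "0 < p" "p \<le> 1"
  shows "measure_pmf.expectation (binomial_pmf n p) (\<lambda>i. 1 / (real i + 1)) \<le> 1 / ((real n + 1) * p)"
proof -
  have p01: "p \<in> {0..1}" using assms by simp
  have e: "measure_pmf.expectation (binomial_pmf n p) (\<lambda>i. 1 / (real i + 1)) =
      (\<Sum>i\<le>n. 1 / (real i + 1) * (real (n choose i) * p^i * (1 - p)^(n - i)))"
    using assms by (subst integral_measure_pmf_real[of "{..n}"]) (auto simp: set_pmf_binomial_eq split: if_splits)
  have "(real n + 1) * p * (\<Sum>i\<le>n. 1 / (real i + 1) * (real (n choose i) * p^i * (1 - p)^(n - i)))
     = (\<Sum>i\<le>n. real (Suc n choose Suc i) * p ^ Suc i * (1 - p) ^ (Suc n - Suc i))"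
    unfolding sum_distrib_left
  proof (intro sum.cong refl)
    fix i assume "i \<in> {..n}"
    have "real (Suc n) * real (n choose i) = real (Suc n choose Suc i) * real (Suc i)"
      using arg_cong[OF Suc_times_binomial_eq[of n i], of real] by (simp only: of_nat_mult)
    then have hB: "(real n + 1) * real (n choose i) / (real i + 1) = real (Suc n choose Suc i)"
      by (simp add: field_simps del: binomial_Suc_Suc)
    have "(real n + 1) * p * (1 / (real i + 1) * (real (n choose i) * p ^ i * (1 - p) ^ (n - i))) =
        ((real n + 1) * real (n choose i) / (real i + 1)) * (p * p ^ i * (1 - p) ^ (n - i))"
      by (simp add: field_simps del: binomial_Suc_Suc)
    also have "\<dots> = real (Suc n choose Suc i) * p ^ Suc i * (1 - p) ^ (Suc n - Suc i)"
      unfolding hB by (simp del: binomial_Suc_Suc add: ac_simps)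
    finally show "(real n + 1) * p * (1 / (real i + 1) * (real (n choose i) * p ^ i * (1 - p) ^ (n - i))) =
        real (Suc n choose Suc i) * p ^ Suc i * (1 - p) ^ (Suc n - Suc i)" .
  qed
  also have "\<dots> \<le> (\<Sum>i\<le>Suc n. real (Suc n choose i) * p ^ i * (1 - p) ^ (Suc n - i))"
    unfolding sum.atMost_Suc_shift[of _ n] using assms by (simp del: binomial_Suc_Suc)
  also have "\<dots> = (p + (1 - p)) ^ Suc n"
    by (subst binomial_ring) (simp add: atLeast0AtMost)
  also have "\<dots> = 1" by simp
  finally have "(real n + 1) * p * (\<Sum>i\<le>n. 1 / (real i + 1) * (real (n choose i) * p^i * (1 - p)^(n - i))) \<le> 1" .
  moreover have cpos: "(real n + 1) * p > 0" using assms by simp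
  ultimately show ?thesis unfolding e pos_le_divide_eq[OF cpos] by (metis mult.commute)
qed

definition Kc :: "int set \<Rightarrow> real" where "Kc S = 3 / 2 * sqrt (real (card S))"

lemma pmf_walk_bound:
  assumes fin: "finite S" and ne: "S \<noteq> {}" and aS: "a \<in> S" and a0: "a \<noteq> 0"
  shows "pmf (lazy_walk S n) x \<le> Kc S / sqrt (real n + 1)"
proof -
  have c1: "card S \<ge> 1" using fin ne by (simp add: Suc_le_eq card_gt_0_iff)
  define p where "p = 1 / real (card S)"
  have p: "0 < p" "p \<le> 1" using c1 unfolding p_def by auto
  define t where "t = sqrt ((real n + 1) * p)"
  have t: "t > 0" unfolding t_def using p by simp
  have tt: "t * t = (real n + 1) * p" unfolding t_def using p by simp
  have fs: "finite (set_pmf (binomial_pmf n p))" using p by auto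
  have "pmf (lazy_walk S n) x = (Pop S ^^ n) ((Ta a ^^ 0) (\<lambda>y. if y = x then 1 else 0)) 0"
    using pmf_walk[OF fin ne] by simp
  also have "\<dots> \<le> measure_pmf.expectation (binomial_pmf n p) (\<lambda>i. bb i)"
    using sup_ind[OF fin ne aS a0, of n 0 x 0] unfolding p_def by simp
  also have "\<dots> \<le> measure_pmf.expectation (binomial_pmf n p) (\<lambda>i. 1 / (2 * t) + t * (1 / (real i + 1)))"
  proof (rule integral_mono)
    show "integrable (measure_pmf (binomial_pmf n p)) (\<lambda>i. bb i)" using fs by (rule integrable_measure_pmf_finite)
    show "integrable (measure_pmf (binomial_pmf n p)) (\<lambda>i. 1 / (2 * t) + t * (1 / (real i + 1)))"
      using fs by (rule integrable_measure_pmf_finite)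
    fix i
    have amgm: "bb i \<le> (1 / t + t * (bb i)^2) / 2"
    proof -
      have "0 \<le> (1 - t * bb i)^2 / t" using t by simp
      then show ?thesis using t by (simp add: field_simps power2_eq_square)
    qed
    also have "\<dots> \<le> (1 / t + t * (2 / (real i + 1))) / 2"
    proof -
      have "t * (bb i)^2 \<le> t * (2 / (real i + 1))" using bb_sq[of i] t by (intro mult_left_mono) auto
      then show ?thesis by (intro divide_right_mono add_left_mono) auto
    qed
    finally show "bb i \<le> 1 / (2 * t) + t * (1 / (real i + 1))" by (simp add: field_simps)
  qed
  also have "\<dots> = 1 / (2 * t) + t * measure_pmf.expectation (binomial_pmf n p) (\<lambda>i. 1 / (real i + 1))"
  proof -
    have "measure_pmf.expectation (binomial_pmf n p) (\<lambda>i. 1 / (2 * t) + t * (1 / (real i + 1))) =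
        measure_pmf.expectation (binomial_pmf n p) (\<lambda>i. 1 / (2 * t)) +
        measure_pmf.expectation (binomial_pmf n p) (\<lambda>i. t * (1 / (real i + 1)))"
      by (rule Bochner_Integration.integral_add[OF integrable_measure_pmf_finite[OF fs, of "\<lambda>i. 1 / (2 * t)"]
                                integrable_measure_pmf_finite[OF fs, of "\<lambda>i. t * (1 / (real i + 1))"]])
    then show ?thesis by (simp only: integral_mult_right_zero) simp
  qed
  also have "\<dots> \<le> 1 / (2 * t) + t * (1 / ((real n + 1) * p))"
    using mult_left_mono[OF exp_inv_binomial[OF p, of n], of t] t by simp
  also have "\<dots> = 3 / (2 * t)" unfolding tt[symmetric] using t by (simp add: field_simps)
  also have "\<dots> = Kc S / sqrt (real n + 1)"
    unfolding t_def Kc_def p_def using c1 by (simp add: real_sqrt_divide real_sqrt_mult field_simps)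
  finally show ?thesis .
qed

lemma Pop_sum: "finite J \<Longrightarrow> Pop S (\<lambda>x. \<Sum>j\<in>J. f j x) y = (\<Sum>j\<in>J. Pop S (f j) y)"
  unfolding Pop_def by (simp add: sum.distrib sum_divide_distrib sum.swap[of _ S])

lemma Popn_sum: "finite J \<Longrightarrow> (Pop S ^^ n) (\<lambda>x. \<Sum>j\<in>J. f j x) = (\<lambda>y. \<Sum>j\<in>J. (Pop S ^^ n) (f j) y)"
proof (induction n)
  case 0 then show ?case by simp
next
  case (Suc n)
  show ?case by (rule ext) (simp add: Suc Pop_sum)
qed

lemma cos_int_2pi: "cos (2 * pi * real_of_int m) = 1"
  using cos_one_2pi_int[of "2 * pi * real_of_int m"] by (auto intro!: exI[of _ m] simp: ac_simps)

lemma roots_cos: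
  assumes L: "L > (0::int)"
  shows "(\<Sum>j<nat L. cos (2 * pi * real j / real_of_int L * real_of_int x)) = (if L dvd x then real_of_int L else 0)"
proof (cases "L dvd x")
  case True
  then obtain k where k: "x = L * k" by auto
  have "cos (2 * pi * real j / real_of_int L * real_of_int x) = 1" for j
  proof -
    have "2 * pi * real j / real_of_int L * real_of_int x = 2 * pi * real_of_int (int j * k)"
      using L unfolding k by (simp add: field_simps)
    then show ?thesis using cos_int_2pi[of "int j * k"] by (simp only:)
  qed
  then show ?thesis using True L by simp
next
  case False
  define th where "th = 2 * pi * real_of_int x / real_of_int L"
  define z where "z = cis th"
  have trm: "cos (2 * pi * real j / real_of_int L * real_of_int x) = Re (z ^ j)" for j
  proof -
    have "z ^ j = cis (real j * th)" unfolding z_def by (rule Complex.DeMoivre)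
    then have "Re (z ^ j) = cos (real j * th)" by simp
    moreover have "real j * th = 2 * pi * real j / real_of_int L * real_of_int x" unfolding th_def by simp
    ultimately show ?thesis by simp
  qed
  have z1: "z \<noteq> 1"
  proof
    assume "z = 1"
    then have "cos th = 1" unfolding z_def by (metis Re_complex_of_real cis.simps(1) one_complex.simps(1))
    then have "\<exists>m::int. th = real_of_int m * 2 * pi" by (simp only: cos_one_2pi_int)
    then obtain m :: int where m: "th = real_of_int m * 2 * pi" by blast
    then have "real_of_int x = real_of_int m * real_of_int L" using L unfolding th_def by (simp add: field_simps)
    then have "x = m * L" by (metis of_int_eq_iff of_int_mult)
    then show False using False by simp
  qed
  have zN: "z ^ nat L = 1"
  proof -
    have "z ^ nat L = cis (real (nat L) * th)" unfolding z_def by (rule Complex.DeMoivre)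
    also have "real (nat L) * th = 2 * pi * real_of_int x" unfolding th_def using L by simp
    also have "cis (2 * pi * real_of_int x) = 1" by (rule cis_multiple_2pi) simp
    finally show ?thesis .
  qed
  have "(\<Sum>j<nat L. z ^ j) = 0" using z1 zN by (simp add: sum_gp_strict)
  moreover have "(\<Sum>j<nat L. cos (2 * pi * real j / real_of_int L * real_of_int x)) = Re (\<Sum>j<nat L. z ^ j)"
    by (simp only: trm Re_sum)
  ultimately show ?thesis using False by simp
qed

lemma phi_0: "finite S \<Longrightarrow> S \<noteq> {} \<Longrightarrow> phi S 0 = 1"
  unfolding phi_def by (simp add: card_gt_0_iff)

lemma phi_nonneg: assumes "finite S" "S \<noteq> {}" shows "phi S t \<ge> 0"
proof -
  have c: "real (card S) > 0" using assms by (simp add: card_gt_0_iff)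
  have "(\<Sum>s\<in>S. cos (t * real_of_int s)) \<ge> (\<Sum>s\<in>S. -1)" by (intro sum_mono) simp
  then have "(\<Sum>s\<in>S. cos (t * real_of_int s)) \<ge> - real (card S)" by simp
  then show ?thesis unfolding phi_def using c by (simp add: field_simps)
qed

lemma phi_le1: assumes "finite S" "S \<noteq> {}" shows "phi S t \<le> 1"
proof -
  have c: "real (card S) > 0" using assms by (simp add: card_gt_0_iff)
  have "(\<Sum>s\<in>S. cos (t * real_of_int s)) \<le> (\<Sum>s\<in>S. 1)" by (intro sum_mono) simp
  then have "(\<Sum>s\<in>S. cos (t * real_of_int s)) \<le> real (card S)" by simp
  then show ?thesis unfolding phi_def using c by (simp add: field_simps)
qed

lemma phi_eq1:
  assumes "finite S" "S \<noteq> {}" "phi S t = 1" "s \<in> S"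
  shows "cos (t * real_of_int s) = 1"
proof -
  have c: "real (card S) > 0" using assms by (simp add: card_gt_0_iff)
  have "(\<Sum>s\<in>S. cos (t * real_of_int s)) = real (card S)" using assms(3) c unfolding phi_def by (simp add: field_simps)
  then have "(\<Sum>s\<in>S. 1 - cos (t * real_of_int s)) = 0" by (simp add: sum_subtractf)
  then have "\<forall>s\<in>S. 1 - cos (t * real_of_int s) = 0" using assms(1) by (subst sum_nonneg_eq_0_iff[symmetric]) auto
  then show ?thesis using assms(4) by simp
qed

lemma phi_lt1:
  assumes fin: "finite S" and ne: "S \<noteq> {}" and gen: "int_generated S = UNIV"
    and L: "L > (0::int)" and j: "0 < j" "j < nat L"
  shows "phi S (2 * pi * real j / real_of_int L) < 1"
proof (rule ccontr)
  assume "\<not> phi S (2 * pi * real j / real_of_int L) < 1"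
  then have p1: "phi S (2 * pi * real j / real_of_int L) = 1" using phi_le1[OF fin ne] by (simp add: not_less antisym)
  define N where "N = {y. L dvd int j * y}"
  have sub: "int_subgroup N" unfolding N_def int_subgroup_def by (auto simp: right_diff_distrib)
  have SN: "S \<subseteq> N"
  proof
    fix s assume s: "s \<in> S"
    have "cos (2 * pi * real j / real_of_int L * real_of_int s) = 1" using phi_eq1[OF fin ne p1 s] .
    then have "\<exists>m::int. 2 * pi * real j / real_of_int L * real_of_int s = real_of_int m * 2 * pi"
      by (simp only: cos_one_2pi_int)
    then obtain m :: int where m: "2 * pi * real j / real_of_int L * real_of_int s = real_of_int m * 2 * pi"
      by blast
    then have "real j * real_of_int s = real_of_int m * real_of_int L" using L by (simp add: field_simps)
    then have "int j * s = m * L" by (metis of_int_eq_iff of_int_mult of_int_of_nat_eq)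
    then show "s \<in> N" unfolding N_def by simp
  qed
  have "int_generated S \<subseteq> N" unfolding int_generated_def using sub SN by blast
  then have "1 \<in> N" using gen by auto
  then have "L dvd int j" unfolding N_def by simp
  then have "L \<le> int j" using j by (simp add: zdvd_imp_le)
  then show False using j L by linarith
qed

lemma equidist:
  assumes fin: "finite S" and ne: "S \<noteq> {}" and sym: "\<forall>s\<in>S. - s \<in> S"
    and gen: "int_generated S = UNIV" and L: "L > (0::int)"
  shows "(\<lambda>n. measure_pmf.expectation (lazy_walk S n) (\<lambda>x. if L dvd x then 1 else 0)) \<longlonglongrightarrow> 1 / real_of_int L"
proof -
  define th where "th = (\<lambda>j::nat. 2 * pi * real j / real_of_int L)"
  have ind: "(\<lambda>x. if L dvd x then 1 else 0) = (\<lambda>x. \<Sum>j<nat L. (1 / real_of_int L) * cos (th j * real_of_int x))"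
    unfolding th_def sum_distrib_left[symmetric] roots_cos[OF L] using L by auto
  have e: "measure_pmf.expectation (lazy_walk S n) (\<lambda>x. if L dvd x then 1 else 0) =
      (\<Sum>j<nat L. (1 / real_of_int L) * phi S (th j) ^ n)" for n
    unfolding exp_walk[OF fin ne] ind Popn_sum[OF finite_lessThan] Popn_cmult Popn_cos[OF fin ne sym] by simp
  have lim: "(\<lambda>n. (1 / real_of_int L) * phi S (th j) ^ n) \<longlonglongrightarrow> (if j = 0 then 1 / real_of_int L else 0)"
    if "j \<in> {..<nat L}" for j
  proof (cases "j = 0")
    case True
    then show ?thesis using phi_0[OF fin ne] unfolding th_def by simp
  next
    case False
    have "phi S (th j) < 1" unfolding th_def using phi_lt1[OF fin ne gen L] False that by auto
    moreover have "phi S (th j) \<ge> 0" by (rule phi_nonneg[OF fin ne])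
    ultimately have "(\<lambda>n. phi S (th j) ^ n) \<longlonglongrightarrow> 0" by (intro LIMSEQ_power_zero) auto
    then show ?thesis using False by (simp add: tendsto_divide_zero)
  qed
  have "(\<lambda>n. \<Sum>j<nat L. (1 / real_of_int L) * phi S (th j) ^ n) \<longlonglongrightarrow> (\<Sum>j<nat L. if j = 0 then 1 / real_of_int L else 0)"
    by (rule tendsto_sum) (rule lim)
  moreover have "(\<Sum>j<nat L. if j = 0 then 1 / real_of_int L else 0) = 1 / real_of_int L"
    using L by (simp add: sum.delta')
  ultimately show ?thesis unfolding e by simp
qed

abbreviation EW :: "int set \<Rightarrow> nat \<Rightarrow> (int \<Rightarrow> real) \<Rightarrow> real" where
  "EW S n f \<equiv> measure_pmf.expectation (lazy_walk S n) f"

lemma EW_int: assumes "finite S" "S \<noteq> {}" shows "integrable (measure_pmf (lazy_walk S n)) (f :: int \<Rightarrow> real)"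
  using finite_walk[OF assms] by (rule integrable_measure_pmf_finite)

lemma EW_mono: "finite S \<Longrightarrow> S \<noteq> {} \<Longrightarrow> (\<And>x. f x \<le> g x) \<Longrightarrow> EW S n f \<le> EW S n g"
  by (rule integral_mono[OF EW_int EW_int]) auto

lemma EW_add: "finite S \<Longrightarrow> S \<noteq> {} \<Longrightarrow> EW S n (\<lambda>x. f x + g x) = EW S n f + EW S n g"
  by (rule Bochner_Integration.integral_add[OF EW_int EW_int])

lemma EW_diff: "finite S \<Longrightarrow> S \<noteq> {} \<Longrightarrow> EW S n (\<lambda>x. f x - g x) = EW S n f - EW S n g"
  by (rule Bochner_Integration.integral_diff[OF EW_int EW_int])

lemma EW_delta: "finite S \<Longrightarrow> S \<noteq> {} \<Longrightarrow> EW S n (\<lambda>x. if x = c then 1 else 0) = pmf (lazy_walk S n) c"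
  using pmf_walk exp_walk by metis

lemma EW_const: "EW S n (\<lambda>x. c) = c"
  by simp

lemma EW_sq:
  assumes "finite S" "S \<noteq> {}" "\<forall>s\<in>S. - s \<in> S"
  shows "EW S n (\<lambda>x. (real_of_int x)^2) = real n * sig S"
proof -
  have "EW S n (\<lambda>x. (real_of_int x)^2 + 0) = (Pop S ^^ n) (\<lambda>x. (real_of_int x)^2 + 0) 0"
    by (rule exp_walk[OF assms(1,2)])
  also have "\<dots> = real n * sig S" unfolding Popn_sq[OF assms] by simp
  finally show ?thesis by simp
qed

lemma EW_D:
  assumes "finite S" "S \<noteq> {}"
  shows "EW S n (\<lambda>x. real (DZ x)) = 2 * EW S n (\<lambda>x. if x = 0 then 0 else 1) + (\<Sum>k. EW S n (gk k))"
proof -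
  define A where "A = set_pmf (lazy_walk S n)"
  have fA: "finite A" unfolding A_def by (rule finite_walk[OF assms])
  have E: "EW S n f = (\<Sum>a\<in>A. f a * pmf (lazy_walk S n) a)" for f
    using fA unfolding A_def by (subst integral_measure_pmf_real[of "set_pmf (lazy_walk S n)"]) auto
  have sm: "summable (\<lambda>k. gk k a)" for a using gk_sums[of a] by (rule sums_summable)
  have "EW S n (\<lambda>x. real (DZ x)) = (\<Sum>a\<in>A. (2 * (if a = 0 then 0 else 1) + (\<Sum>k. gk k a)) * pmf (lazy_walk S n) a)"
    unfolding E DZ_decomp ..
  also have "\<dots> = 2 * (\<Sum>a\<in>A. (if a = 0 then 0 else 1) * pmf (lazy_walk S n) a) +
       (\<Sum>a\<in>A. (\<Sum>k. gk k a) * pmf (lazy_walk S n) a)"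
    by (simp add: distrib_right sum.distrib sum_distrib_left mult.assoc)
  also have "(\<Sum>a\<in>A. (\<Sum>k. gk k a) * pmf (lazy_walk S n) a) = (\<Sum>a\<in>A. \<Sum>k. gk k a * pmf (lazy_walk S n) a)"
    by (intro sum.cong refl suminf_mult2 sm)
  also have "\<dots> = (\<Sum>k. \<Sum>a\<in>A. gk k a * pmf (lazy_walk S n) a)"
    by (rule suminf_sum[symmetric]) (intro summable_mult2 sm)
  also have "\<dots> = (\<Sum>k. EW S n (gk k))" unfolding E ..
  finally show ?thesis unfolding E .
qed

lemma exists_a:
  assumes gen: "int_generated S = UNIV"
  shows "\<exists>a\<in>S. a \<noteq> 0"
proof (rule ccontr)
  assume "\<not> (\<exists>a\<in>S. a \<noteq> 0)"
  then have "S \<subseteq> {0}" by auto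
  moreover have "int_subgroup {0}" by (simp add: int_subgroup_def)
  ultimately have "int_generated S \<subseteq> {0}" unfolding int_generated_def by blast
  then have "(1::int) \<in> {0}" using gen by blast
  then show False by simp
qed

lemma sqrt_lim: "(\<lambda>n. c / sqrt (real n + 1)) \<longlonglongrightarrow> 0"
proof -
  have "(\<lambda>n. inverse (real (Suc n))) \<longlonglongrightarrow> 0" by (rule LIMSEQ_inverse_real_of_nat)
  then have "(\<lambda>n. sqrt (inverse (real (Suc n)))) \<longlonglongrightarrow> sqrt 0" by (rule tendsto_real_sqrt)
  then have "(\<lambda>n. c * sqrt (inverse (real (Suc n)))) \<longlonglongrightarrow> c * 0" by (intro tendsto_mult tendsto_const) simp
  moreover have "c * sqrt (inverse (real (Suc n))) = c / sqrt (real n + 1)" for n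
    by (simp add: real_sqrt_inverse divide_inverse add.commute)
  ultimately show ?thesis by simp
qed

lemma pmf0_lim:
  assumes "finite S" "S \<noteq> {}" "a \<in> S" "a \<noteq> 0"
  shows "(\<lambda>n. pmf (lazy_walk S n) 0) \<longlonglongrightarrow> 0"
proof (rule real_tendsto_sandwich[OF _ _ tendsto_const sqrt_lim[of "Kc S"]])
  show "\<forall>\<^sub>F n in sequentially. 0 \<le> pmf (lazy_walk S n) 0" by simp
  show "\<forall>\<^sub>F n in sequentially. pmf (lazy_walk S n) 0 \<le> Kc S / sqrt (real n + 1)"
    using pmf_walk_bound[OF assms] by simp
qed

lemma gk_split: "gk k x = (if ell (k+2) dvd x then 1 else 0) - (if x = 0 then 1 else 0)"
  by (simp add: gk_def)

lemma gk_lim: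
  assumes fin: "finite S" and ne: "S \<noteq> {}" and sym: "\<forall>s\<in>S. - s \<in> S"
    and gen: "int_generated S = UNIV" and aS: "a \<in> S" and a0: "a \<noteq> 0"
  shows "(\<lambda>n. EW S n (gk k)) \<longlonglongrightarrow> 1 / real_of_int (ell (k+2))"
proof -
  have "EW S n (gk k) = EW S n (\<lambda>x. if ell (k+2) dvd x then 1 else 0) - pmf (lazy_walk S n) 0" for n
    unfolding gk_split EW_diff[OF fin ne] EW_delta[OF fin ne] ..
  moreover have "(\<lambda>n. EW S n (\<lambda>x. if ell (k+2) dvd x then 1 else 0) - pmf (lazy_walk S n) 0)
      \<longlonglongrightarrow> 1 / real_of_int (ell (k+2)) - 0"
    by (intro tendsto_diff equidist[OF fin ne sym gen ell_pos] pmf0_lim[OF fin ne aS a0])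
  ultimately show ?thesis by simp
qed

lemma nz_lim:
  assumes "finite S" "S \<noteq> {}" "a \<in> S" "a \<noteq> 0"
  shows "(\<lambda>n. EW S n (\<lambda>x. if x = 0 then 0 else 1)) \<longlonglongrightarrow> 1"
proof -
  have "EW S n (\<lambda>x. if x = 0 then 0 else 1) = EW S n (\<lambda>x. 1 - (if x = 0 then 1 else 0))" for n
    by (rule arg_cong[where f = "EW S n"]) auto
  also have "\<dots> n = 1 - pmf (lazy_walk S n) 0" for n
    unfolding EW_diff[OF assms(1,2)] EW_delta[OF assms(1,2)] by simp
  finally have e: "EW S n (\<lambda>x. if x = 0 then 0 else 1) = 1 - pmf (lazy_walk S n) 0" for n .
  have "(\<lambda>n. 1 - pmf (lazy_walk S n) 0) \<longlonglongrightarrow> 1 - 0"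
    by (intro tendsto_diff tendsto_const pmf0_lim[OF assms])
  then show ?thesis unfolding e by simp
qed

lemma sig_nonneg: "sig S \<ge> 0"
  unfolding sig_def by (intro divide_nonneg_nonneg sum_nonneg) auto

lemma Kc_nonneg: "Kc S \<ge> 0"
  unfolding Kc_def by simp

lemma dom:
  assumes fin: "finite S" and ne: "S \<noteq> {}" and sym: "\<forall>s\<in>S. - s \<in> S"
    and aS: "a \<in> S" and a0: "a \<noteq> 0"
  shows "EW S n (gk k) \<le> (8 * Kc S + sig S) / (real k + 1)^2"
proof -
  define l where "l = ell (k+2)"
  have l: "l > 0" unfolding l_def by (rule ell_pos)
  define R where "R = (real k + 1) * sqrt (real n + 1)"
  have R: "R > 0" unfolding R_def by simp
  define A where "A = {x. x \<noteq> 0 \<and> l dvd x \<and> real_of_int \<bar>x\<bar> \<le> R}"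
  define N where "N = \<lfloor>R / real_of_int l\<rfloor>"
  have N0: "N \<ge> 0" unfolding N_def using R l by simp
  have NR: "real_of_int N \<le> R / real_of_int l" unfolding N_def by simp
  have Asub: "A \<subseteq> (\<lambda>i. l * i) ` ({-N..-1} \<union> {1..N})"
  proof
    fix x assume "x \<in> A"
    then have x: "x \<noteq> 0" "l dvd x" "real_of_int \<bar>x\<bar> \<le> R" unfolding A_def by auto
    then obtain i where i: "x = l * i" by auto
    have i0: "i \<noteq> 0" using x i by auto
    have "real_of_int l * real_of_int \<bar>i\<bar> \<le> R" using x(3) l unfolding i by (simp add: abs_mult)
    then have "real_of_int \<bar>i\<bar> \<le> R / real_of_int l" using l by (simp add: field_simps)
    then have "\<bar>i\<bar> \<le> N" unfolding N_def by (simp add: le_floor_iff)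
    then have "i \<in> {-N..-1} \<union> {1..N}" using i0 by auto
    then show "x \<in> (\<lambda>i. l * i) ` ({-N..-1} \<union> {1..N})" using i by blast
  qed
  have finA: "finite A" by (rule finite_subset[OF Asub]) simp
  have "card A \<le> card ((\<lambda>i. l * i) ` ({-N..-1} \<union> {1..N}))" by (rule card_mono[OF _ Asub]) simp
  also have "\<dots> \<le> card ({-N..-1} \<union> {1..N})" by (rule card_image_le) simp
  also have "\<dots> \<le> card {-N..-1} + card {1..N}" by (rule card_Un_le)
  also have "\<dots> = nat N + nat N" by simp
  finally have "real (card A) \<le> real (nat N) + real (nat N)" by linarith
  also have "real (nat N) = real_of_int N" using N0 by simp
  finally have cardA: "real (card A) \<le> 2 * (R / real_of_int l)" using NR by linarith
  have pt: "gk k x \<le> (if x \<in> A then 1 else 0) + (real_of_int x)^2 / R^2" for x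
  proof (cases "x \<in> A")
    case True
    then show ?thesis by (simp add: gk_def)
  next
    case False
    show ?thesis
    proof (cases "gk k x = 0")
      case True
      then show ?thesis by simp
    next
      case False': False
      then have "x \<noteq> 0" "l dvd x" unfolding gk_def l_def by (auto split: if_splits)
      then have "R < real_of_int \<bar>x\<bar>" using False unfolding A_def by auto
      then have "R^2 < (real_of_int \<bar>x\<bar>)^2" using R by (intro power_strict_mono) auto
      then have "R^2 \<le> (real_of_int x)^2" by simp
      then have "1 \<le> (real_of_int x)^2 / R^2" using R by simp
      moreover have "gk k x \<le> 1" by (simp add: gk_def)
      ultimately show ?thesis using False by simp
    qed
  qed
  have "EW S n (gk k) \<le> EW S n (\<lambda>x. (if x \<in> A then 1 else 0) + (real_of_int x)^2 / R^2)"
    by (rule EW_mono[OF fin ne pt])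
  also have "\<dots> = EW S n (\<lambda>x. if x \<in> A then 1 else 0) + EW S n (\<lambda>x. (real_of_int x)^2) / R^2"
    unfolding EW_add[OF fin ne] by simp
  also have "EW S n (\<lambda>x. if x \<in> A then 1 else 0) = (\<Sum>x\<in>A. pmf (lazy_walk S n) x)"
    using finA by (subst integral_measure_pmf_real[of A]) (auto split: if_splits)
  also have "\<dots> \<le> real (card A) * (Kc S / sqrt (real n + 1))"
    using sum_bounded_above[of A "pmf (lazy_walk S n)" "Kc S / sqrt (real n + 1)"] pmf_walk_bound[OF fin ne aS a0, of n]
    by simp
  also have "\<dots> \<le> 2 * (R / real_of_int l) * (Kc S / sqrt (real n + 1))"
    using cardA Kc_nonneg[of S] by (intro mult_right_mono) auto
  also have "2 * (R / real_of_int l) * (Kc S / sqrt (real n + 1)) = 2 * (real k + 1) * Kc S / real_of_int l"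
    unfolding R_def by simp
  also have "EW S n (\<lambda>x. (real_of_int x)^2) / R^2 = real n * sig S / ((real k + 1)^2 * (real n + 1))"
    unfolding EW_sq[OF fin ne sym] R_def by (simp add: power_mult_distrib)
  also have "\<dots> \<le> sig S / (real k + 1)^2"
  proof -
    have eq: "real n * sig S / ((real k + 1)^2 * (real n + 1)) = (real n / (real n + 1)) * (sig S / (real k + 1)^2)"
      by (simp add: divide_simps)
    have "(real n / (real n + 1)) * (sig S / (real k + 1)^2) \<le> sig S / (real k + 1)^2"
    proof (rule mult_left_le_one_le)
      show "0 \<le> sig S / (real k + 1)^2" using sig_nonneg[of S] by simp
      show "0 \<le> real n / (real n + 1)" by simp
      show "real n / (real n + 1) \<le> 1" by simp
    qed
    then show ?thesis unfolding eq .
  qed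
  also have "2 * (real k + 1) * Kc S / real_of_int l \<le> 8 * Kc S / (real k + 1)^2"
  proof -
    have "real_of_int (2 * (int k + 1)^3) \<le> real_of_int (8 * ell (k+2))"
      using ell_bound[of k] by (simp only: of_int_le_iff)
    then have "2 * (real k + 1)^3 \<le> 8 * real_of_int l" unfolding l_def by simp
    then have h: "2 * (real k + 1) * (real k + 1)^2 \<le> 8 * real_of_int l"
      by (simp only: power3_eq_cube power2_eq_square mult.assoc)
    have lp: "real_of_int l * (real k + 1)^2 > 0" using l by simp
    have "2 * (real k + 1) * (real k + 1)^2 / (real_of_int l * (real k + 1)^2) \<le> 8 * real_of_int l / (real_of_int l * (real k + 1)^2)"
      using h lp by (intro divide_right_mono) auto
    moreover have "2 * (real k + 1) * (real k + 1)^2 / (real_of_int l * (real k + 1)^2) = 2 * (real k + 1) / real_of_int l"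
      by (rule nonzero_mult_divide_mult_cancel_right) simp
    moreover have "8 * real_of_int l / (real_of_int l * (real k + 1)^2) = 8 / (real k + 1)^2"
      using l by (simp add: field_simps)
    ultimately have "2 * (real k + 1) / real_of_int l \<le> 8 / (real k + 1)^2" by simp
    then have "Kc S * (2 * (real k + 1) / real_of_int l) \<le> Kc S * (8 / (real k + 1)^2)"
      using Kc_nonneg[of S] by (intro mult_left_mono) auto
    then show ?thesis by (simp add: field_simps)
  qed
  finally show ?thesis by (simp add: add_divide_distrib)
qed

lemma gk_nonneg: "gk k x \<ge> 0" by (simp add: gk_def)

theorem corollary4p5:
  fixes S :: "int set"
  assumes "finite S"
    and "\<forall>s\<in>S. - s \<in> S"
    and "int_generated S = UNIV"
  shows "summable (\<lambda>k. 1 / real (int_index (Lambda (k + 2))))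
    \<and> (\<lambda>n. measure_pmf.expectation (lazy_walk S n) (\<lambda>x. real (DZ x)))
        \<longlonglongrightarrow> 2 + (\<Sum>k. 1 / real (int_index (Lambda (k + 2))))"
proof -
  note fin = assms(1) and sym = assms(2) and gen = assms(3)
  obtain a where aS: "a \<in> S" and a0: "a \<noteq> 0" using exists_a[OF gen] by blast
  have ne: "S \<noteq> {}" using aS by auto
  have idx: "real (int_index (Lambda (k + 2))) = real_of_int (ell (k + 2))" for k
    unfolding index_Lambda using ell_pos[of "k+2"] by simp
  define \<beta> where "\<beta> = (\<lambda>k. 1 / real_of_int (ell (k + 2)))"
  define M where "M = (\<lambda>k::nat. (8 * Kc S + sig S) * inverse (real (Suc k) ^ 2))"
  have sM: "summable M"
  proof -
    have "summable (\<lambda>k::nat. inverse (real k ^ 2))" by (rule inverse_power_summable) simp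
    then have "summable (\<lambda>k::nat. inverse (real (Suc k) ^ 2))" by (subst summable_Suc_iff)
    then show ?thesis unfolding M_def by (rule summable_mult)
  qed
  have bound: "norm (EW S n (gk k)) \<le> M k" for k n
  proof -
    have "EW S n (gk k) \<ge> 0" by (rule Bochner_Integration.integral_nonneg) (simp add: gk_nonneg)
    then have "norm (EW S n (gk k)) = EW S n (gk k)" by simp
    also have "\<dots> \<le> (8 * Kc S + sig S) / (real k + 1)^2" by (rule dom[OF fin ne sym aS a0])
    also have "\<dots> = M k" unfolding M_def by (simp add: divide_inverse add.commute)
    finally show ?thesis .
  qed
  have T: "eventually (\<lambda>n. summable (\<lambda>k. norm (EW S n (gk k)))) sequentially \<and>
      summable (\<lambda>k. norm (\<beta> k)) \<and> ((\<lambda>n. \<Sum>k. EW S n (gk k)) \<longlonglongrightarrow> suminf \<beta>)"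
  proof (rule tannerys_theorem[where M = M])
    show "(\<lambda>n. EW S n (gk k)) \<longlonglongrightarrow> \<beta> k" for k unfolding \<beta>_def by (rule gk_lim[OF fin ne sym gen aS a0])
    show "\<forall>\<^sub>F (k, n) in at_top \<times>\<^sub>F sequentially. norm (EW S n (gk k)) \<le> M k"
      using bound by (simp add: always_eventually)
  qed (use sM in auto)
  have sb: "summable \<beta>"
  proof -
    have "summable (\<lambda>k. norm (\<beta> k))" using T by blast
    then show ?thesis by (rule summable_norm_cancel)
  qed
  have lim: "(\<lambda>n. 2 * EW S n (\<lambda>x. if x = 0 then 0 else 1) + (\<Sum>k. EW S n (gk k))) \<longlonglongrightarrow> 2 * 1 + suminf \<beta>"
    using T by (intro tendsto_add tendsto_mult tendsto_const nz_lim[OF fin ne aS a0]) auto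
  have bi: "(\<lambda>k. 1 / real (int_index (Lambda (k + 2)))) = \<beta>" unfolding \<beta>_def idx ..
  show ?thesis unfolding bi using sb lim EW_D[OF fin ne] by simp
qed


end
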